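(* Let $s\ge4$, $j\in\{s,\dots,p\}$, $M>0$, $\gamma\in(0,1)$ and $\tilde a=\sqrt{M^2/(2+\gamma^2)}$. Define $\beta^*=(\tfrac{\tilde a}{\sqrt{s-2}},\dots,\tfrac{\tilde a}{\sqrt{s-2}},\tilde a,0,\dots,0)+\tilde a\gamma e_j$ (first $s-2$ entries equal to $\tilde a/\sqrt{s-2}$, entry $s-1$ equal to $\tilde a$), $\Sigma_0=I_p-\gamma(e_{s-1}e_j^\top+e_je_{s-1}^\top)$, and $\beta_1=\beta^*-2\tilde a\gamma e_j$, $\Sigma_1=I_p+\gamma(e_{s-1}e_j^\top+e_je_{s-1}^\top)$. In the model where $x\sim N_p(0,\Sigma)$, $y=x^\top\beta+\varepsilon$ with $\varepsilon\sim N(0,\sigma_\varepsilon^2)$ independent, and each coordinate of $x$ is independently observed with probability $\rho_*$, let $p(y,x_{\mathrm{obs}};\beta,\Sigma)$ denote the joint likelihood of the observation pattern and the observed data $(y,x_{\mathrm{obs}})$. Then $p(y,x_{\mathrm{obs}};\beta^*,\Sigma_0)=p(y,x_{\mathrm{obs}};\beta_1,\Sigma_1)$ for every observation pattern in which $x_{s-1}$ and $x_j$ are not both observed (and all values of $y,x_{\mathrm{obs}}$).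
   Context: $e_k$ denotes the $k$-th standard basis vector of $\mathbb R^p$. The missingness is independent of $(x,\varepsilon)$. *)

theory Defs
  imports "Jordan_Normal_Form.Determinant"
begin

text \<open>Coordinates of x are indexed 1..p; vectors are nat => real, matrices nat => nat => real
  (only entries with indices in 1..p matter).\<close>

definition gauss_density :: "real mat \<Rightarrow> real vec \<Rightarrow> real" where
  "gauss_density C v =
     (let d = dim_row C;
          Ci = (SOME B. B \<in> carrier_mat d d \<and> inverts_mat C B \<and> inverts_mat B C)
      in (2 * pi) powr (- real d / 2) * det C powr (- 1 / 2)
         * exp (- 1 / 2 * (\<Sum>a<d. \<Sum>b<d. v $ a * Ci $$ (a, b) * v $ b)))"

text \<open>Covariance matrix of the observed vector (y, x_O) (y first, then the observed
  coordinates in increasing order) under x ~ N_p(0,Sigma), y = x'beta + eps,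
  eps ~ N(0, sigma^2) independent of x.\<close>
definition obs_cov :: "nat \<Rightarrow> (nat \<Rightarrow> real) \<Rightarrow> (nat \<Rightarrow> nat \<Rightarrow> real) \<Rightarrow> real \<Rightarrow> nat set \<Rightarrow> real mat" where
  "obs_cov p \<beta> \<Sigma> \<sigma> Ob =
     (let l = sorted_list_of_set Ob in
      mat (card Ob + 1) (card Ob + 1) (\<lambda>(a, b).
        if a = 0 \<and> b = 0 then (\<Sum>i\<in>{1..p}. \<Sum>k\<in>{1..p}. \<beta> i * \<Sigma> i k * \<beta> k) + \<sigma>\<^sup>2
        else if a = 0 then (\<Sum>k\<in>{1..p}. \<Sigma> (l ! (b - 1)) k * \<beta> k)
        else if b = 0 then (\<Sum>k\<in>{1..p}. \<Sigma> (l ! (a - 1)) k * \<beta> k)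
        else \<Sigma> (l ! (a - 1)) (l ! (b - 1))))"

definition obs_vec :: "real \<Rightarrow> (nat \<Rightarrow> real) \<Rightarrow> nat set \<Rightarrow> real vec" where
  "obs_vec y xo Ob =
     (let l = sorted_list_of_set Ob in
      vec (card Ob + 1) (\<lambda>a. if a = 0 then y else xo (l ! (a - 1))))"

text \<open>Joint likelihood of the observation pattern Ob (set of observed coordinates, a subset of
  1..p; each coordinate observed independently with probability rho) and the observed data
  (y, x_obs), x_obs given as the values xo i for i in Ob.\<close>
definition likelihood :: "nat \<Rightarrow> real \<Rightarrow> real \<Rightarrow> (nat \<Rightarrow> real) \<Rightarrow> (nat \<Rightarrow> nat \<Rightarrow> real)
    \<Rightarrow> nat set \<Rightarrow> real \<Rightarrow> (nat \<Rightarrow> real) \<Rightarrow> real" where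
  "likelihood p \<sigma> \<rho> \<beta> \<Sigma> Ob y xo =
     \<rho> ^ card Ob * (1 - \<rho>) ^ (p - card Ob) * gauss_density (obs_cov p \<beta> \<Sigma> \<sigma> Ob) (obs_vec y xo Ob)"

end

theory Submission
  imports Defs
begin

lemma sumL:
  assumes "finite A"
  shows "(\<Sum>k\<in>A. ((if i = k then 1 else 0) + c * ((if i = u \<and> k = v then 1 else 0) + (if i = v \<and> k = u then 1 else 0))) * (f k::real))
   = (if i\<in>A then f i else 0) + c*((if i=u \<and> v\<in>A then f v else 0) + (if i=v \<and> u\<in>A then f u else 0))"
proof -
  have "(\<Sum>k\<in>A. ((if i = k then 1 else 0) + c * ((if i = u \<and> k = v then 1 else 0) + (if i = v \<and> k = u then 1 else 0))) * (f k::real))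
    = (\<Sum>k\<in>A. (if k = i then f k else 0)) + c * ((\<Sum>k\<in>A. (if i = u then (if k = v then f k else 0) else 0)) + (\<Sum>k\<in>A. (if i = v then (if k = u then f k else 0) else 0)))"
  proof -
    have "\<And>k. ((if i = k then 1 else 0) + c * ((if i = u \<and> k = v then 1 else 0) + (if i = v \<and> k = u then 1 else 0))) * (f k::real)
      = (if k = i then f k else 0) + c * ((if i = u then (if k = v then f k else 0) else 0) + (if i = v then (if k = u then f k else 0) else 0))"
      by (auto simp: algebra_simps)
    then show ?thesis by (simp add: sum.distrib sum_distrib_left[symmetric])
  qed
  also have "\<dots> = (if i\<in>A then f i else 0) + c*((if i=u \<and> v\<in>A then f v else 0) + (if i=v \<and> u\<in>A then f u else 0))"
    using assms by (cases "i = u"; cases "i = v") (simp_all add: sum.delta')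
  finally show ?thesis .
qed

theorem lemma8:
  fixes s j p :: nat and M \<gamma> a \<sigma> \<rho> :: real
    and \<beta>s \<beta>1 :: "nat \<Rightarrow> real" and \<Sigma>0 \<Sigma>1 :: "nat \<Rightarrow> nat \<Rightarrow> real"
    and Ob :: "nat set" and y :: real and xo :: "nat \<Rightarrow> real"
  assumes "s \<ge> 4" and "s \<le> j" and "j \<le> p"
    and "M > 0" and "0 < \<gamma>" and "\<gamma> < 1"
    and "\<sigma> > 0" and "0 \<le> \<rho>" and "\<rho> \<le> 1"
    and a_def: "a = sqrt (M\<^sup>2 / (2 + \<gamma>\<^sup>2))"
    and \<beta>s_def: "\<beta>s = (\<lambda>i. (if 1 \<le> i \<and> i \<le> s - 2 then a / sqrt (real (s - 2))
                          else if i = s - 1 then a else 0)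
                         + (if i = j then a * \<gamma> else 0))"
    and \<Sigma>0_def: "\<Sigma>0 = (\<lambda>i k. (if i = k then 1 else 0)
            - \<gamma> * ((if i = s - 1 \<and> k = j then 1 else 0) + (if i = j \<and> k = s - 1 then 1 else 0)))"
    and \<beta>1_def: "\<beta>1 = (\<lambda>i. \<beta>s i - (if i = j then 2 * a * \<gamma> else 0))"
    and \<Sigma>1_def: "\<Sigma>1 = (\<lambda>i k. (if i = k then 1 else 0)
            + \<gamma> * ((if i = s - 1 \<and> k = j then 1 else 0) + (if i = j \<and> k = s - 1 then 1 else 0)))"
    and "Ob \<subseteq> {1..p}"
    and "\<not> (s - 1 \<in> Ob \<and> j \<in> Ob)"
  shows "likelihood p \<sigma> \<rho> \<beta>s \<Sigma>0 Ob y xo = likelihood p \<sigma> \<rho> \<beta>1 \<Sigma>1 Ob y xo"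
proof -
  have jm: "j \<noteq> s - 1" "s - 1 \<in> {1..p}" "j \<in> {1..p}" using assms(1-3) by auto
  have bsj: "\<beta>s j = a * \<gamma>" and bss: "\<beta>s (s-1) = a"
    using assms(1,2) unfolding \<beta>s_def by auto
  have S0: "\<Sigma>0 = (\<lambda>i k. (if i = k then 1 else 0)
            + (-\<gamma>) * ((if i = s - 1 \<and> k = j then 1 else 0) + (if i = j \<and> k = s - 1 then 1 else 0)))"
    unfolding \<Sigma>0_def by auto
  define w where "w i = (\<Sum>k\<in>{1..p}. \<Sigma>0 i k * \<beta>s k)" for i
  have w0: "(\<Sum>k\<in>{1..p}. \<Sigma>0 i k * \<beta>s k) = w i" for i by (simp add: w_def)
  have w1: "(\<Sum>k\<in>{1..p}. \<Sigma>1 i k * \<beta>1 k) = w i" for i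
  proof -
    have "(\<Sum>k\<in>{1..p}. \<Sigma>1 i k * \<beta>1 k) = (if i\<in>{1..p} then \<beta>1 i else 0) + \<gamma>*((if i=s-1 \<and> j\<in>{1..p} then \<beta>1 j else 0) + (if i=j \<and> s-1\<in>{1..p} then \<beta>1 (s-1) else 0))"
      unfolding \<Sigma>1_def by (rule sumL) simp
    moreover have "w i = (if i\<in>{1..p} then \<beta>s i else 0) + (-\<gamma>)*((if i=s-1 \<and> j\<in>{1..p} then \<beta>s j else 0) + (if i=j \<and> s-1\<in>{1..p} then \<beta>s (s-1) else 0))"
      unfolding w_def S0 by (rule sumL) simp
    ultimately show ?thesis using jm bsj bss unfolding \<beta>1_def
      by (cases "i = j"; cases "i = s - 1") (auto simp: algebra_simps)
  qed
  have wj: "w j = 0"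
  proof -
    have "w j = (if j\<in>{1..p} then \<beta>s j else 0) + (-\<gamma>)*((if j=s-1 \<and> j\<in>{1..p} then \<beta>s j else 0) + (if j=j \<and> s-1\<in>{1..p} then \<beta>s (s-1) else 0))"
      unfolding w_def S0 by (rule sumL) simp
    then show ?thesis using jm bsj bss by (simp add: algebra_simps)
  qed
  have q0: "(\<Sum>i\<in>{1..p}. \<Sum>k\<in>{1..p}. \<beta>s i * \<Sigma>0 i k * \<beta>s k) = (\<Sum>i\<in>{1..p}. \<beta>s i * w i)"
    by (simp add: w_def sum_distrib_left mult.assoc)
  have q1: "(\<Sum>i\<in>{1..p}. \<Sum>k\<in>{1..p}. \<beta>1 i * \<Sigma>1 i k * \<beta>1 k) = (\<Sum>i\<in>{1..p}. \<beta>1 i * w i)"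
    by (simp add: w1[symmetric] sum_distrib_left mult.assoc)
  have q: "(\<Sum>i\<in>{1..p}. \<beta>s i * w i) = (\<Sum>i\<in>{1..p}. \<beta>1 i * w i)"
    by (rule sum.cong) (auto simp: \<beta>1_def wj)
  have mem: "sorted_list_of_set Ob ! n \<in> Ob" if "n < card Ob" for n
    using that by (metis (no_types, lifting) card.infinite not_less0 nth_mem sorted_list_of_set.set_sorted_key_list_of_set length_sorted_list_of_set)
  have SS: "\<Sigma>0 x z = \<Sigma>1 x z" if "x \<in> Ob" "z \<in> Ob" for x z
    using that assms(16) jm(1) unfolding \<Sigma>0_def \<Sigma>1_def by auto
  have "obs_cov p \<beta>s \<Sigma>0 \<sigma> Ob = obs_cov p \<beta>1 \<Sigma>1 \<sigma> Ob"
    unfolding obs_cov_def Let_def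
    apply (rule eq_matI)
    using q0 q1 q w0 w1 mem SS by auto
  then show ?thesis unfolding likelihood_def by simp
qed

end
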